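(* Let $\rho>0$, $\alpha\in(0,1/2)$, and for every $\rho'>0$ let $(P^{\rho'}_t)_{t\ge0}$ be the semigroup of the sticky Brownian motion of stickiness parameter $\rho'$. For each real-valued function $h$ and $x\in\mathbb{R}$ define $$T_n[h](x)=\int_0^1\Big(P^{n^{\alpha}\rho}_{n^{2\alpha}s/n}h(x)-h(x)\Big)\,ds.$$ Let $T:\mathbb{R}\to\mathbb{R}$ be continuously differentiable with, for some $\epsilon>0$, $T(0)=0$, $T'(0)=1$, $\epsilon\le T'(x)\le1/\epsilon$, $|T''(x)|\le1/\epsilon$ for all $x$. Then for every bounded integrable Lipschitz function $k$ that vanishes on an open interval around $0$, $$\lambda\big(|T_n[k_n]|\big)\longrightarrow0\qquad(n\to\infty),$$ where $k_n(x)=k\big(n^{\alpha}T(x/n^{\alpha})\big)$ and $\lambda(f)=\int_{\mathbb{R}}f(y)dy$.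
   Context: The sticky Brownian motion of stickiness parameter $\rho'$ is the one-dimensional diffusion on $\mathbb{R}$ with scale function $s(x)=x$ and speed measure $m(dx)=2\,dx+\rho'\,\delta_0(dx)$; its semigroup is $P^{\rho'}_t h(x)=\mathbb{E}_x[h(X_t)]$ with $X_0=x$ under $\mathbb{P}_x$. *)

theory Defs
  imports "HOL-Analysis.Analysis" "HOL-Probability.Probability"
begin

text \<open>Green function (w.r.t. the speed measure) of the one-dimensional diffusion with
scale function s(x) = x and speed measure m(dx) = 2 dx + r delta_0(dx), for spectral
parameter l > 0: G(x,y) = psi(min x y) phi(max x y) / W, where phi (decreasing) and
psi (increasing) solve d/dm d/ds u = l u, i.e. u'' = 2 l u off 0 and
u'(0+) - u'(0-) = l r u(0), and W = psi' phi - psi phi' is their Wronskian.\<close>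

definition sticky_green :: "real \<Rightarrow> real \<Rightarrow> real \<Rightarrow> real \<Rightarrow> real" where
  "sticky_green r l x y =
     (let g = sqrt (2 * l);
          A = 1 + l * r / (2 * g);
          B = - (l * r / (2 * g));
          phi = (\<lambda>z. if 0 \<le> z then exp (- (g * z)) else A * exp (- (g * z)) + B * exp (g * z));
          psi = (\<lambda>z. phi (- z))
      in psi (min x y) * phi (max x y) / (2 * g + l * r))"

text \<open>K r t x is the law of X_t under P_x for the sticky Brownian motion of stickiness r.
The family is characterised as the diffusion with the above scale and speed: the
transition kernels are probability measures, t \<mapsto> P_t h(x) is continuous on [0,\<infinity>)
for bounded continuous h, and its Laplace transform is the resolvent
R_l h(x) = \<integral> G_l(x,y) h(y) m(dy) with m = 2 dx + r delta_0.\<close>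

definition sticky_kernels :: "(real \<Rightarrow> real \<Rightarrow> real \<Rightarrow> real measure) \<Rightarrow> bool" where
  "sticky_kernels K \<longleftrightarrow>
     (\<forall>r>0. \<forall>t\<ge>0. \<forall>x. prob_space (K r t x) \<and> sets (K r t x) = sets borel) \<and>
     (\<forall>r>0. \<forall>x. \<forall>h::real \<Rightarrow> real. continuous_on UNIV h \<and> bounded (range h) \<longrightarrow>
        continuous_on {0..} (\<lambda>t. \<integral>y. h y \<partial>(K r t x)) \<and>
        (\<forall>l>0. (LBINT t:{0..}. exp (- (l * t)) * (\<integral>y. h y \<partial>(K r t x))) =
                2 * (LBINT y. sticky_green r l x y * h y) + r * sticky_green r l x 0 * h 0))"

definition sticky_P :: "(real \<Rightarrow> real \<Rightarrow> real \<Rightarrow> real measure) \<Rightarrow> real \<Rightarrow> real \<Rightarrow> (real \<Rightarrow> real) \<Rightarrow> real \<Rightarrow> real" where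
  "sticky_P K r t h x = (\<integral>y. h y \<partial>(K r t x))"

definition T_op :: "(real \<Rightarrow> real \<Rightarrow> real \<Rightarrow> real measure) \<Rightarrow> real \<Rightarrow> real \<Rightarrow> nat \<Rightarrow> (real \<Rightarrow> real) \<Rightarrow> real \<Rightarrow> real" where
  "T_op K \<rho> \<alpha> n h x =
     (LBINT s=0..1. sticky_P K (real n powr \<alpha> * \<rho>) (real n powr (2 * \<alpha>) * s / real n) h x - h x)"

end

theory Submission
  imports Defs
begin

lemma green_bounds:
  fixes r l x y :: real
  assumes r: "r > 0" and l: "l > 0"
  shows "sticky_green r l x y \<le> exp (- (sqrt (2*l) * \<bar>x - y\<bar>)) / (2 * sqrt (2*l))"
    and "sticky_green r l x 0 = exp (- (sqrt (2*l) * \<bar>x\<bar>)) / (2 * sqrt (2*l) + l * r)"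
    and "sticky_green r l x y \<ge> 0"
proof -
  define g where "g = sqrt (2*l)"
  have g: "g > 0" using l by (simp add: g_def)
  define A where "A = 1 + l * r / (2 * g)"
  define B where "B = - (l * r / (2 * g))"
  have B0: "B \<le> 0" using l r g by (simp add: B_def)
  have AB: "A + B = 1" by (simp add: A_def B_def)
  have WA: "2 * g + l * r = 2 * g * A" using g by (simp add: A_def field_simps)
  have A1: "A \<ge> 1" using B0 AB by linarith
  define phi where "phi = (\<lambda>z::real. if 0 \<le> z then exp (- (g * z)) else A * exp (- (g * z)) + B * exp (g * z))"
  have G: "sticky_green r l a b = phi (- min a b) * phi (max a b) / (2 * g + l * r)" for a b
    unfolding sticky_green_def Let_def phi_def A_def B_def g_def by simp
  have phiub: "phi z \<le> A * exp (- (g * z))" for z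
  proof (cases "0 \<le> z")
    case True then show ?thesis using A1 by (simp add: phi_def)
  next
    case False
    have "B * exp (g * z) \<le> 0" using B0 by (simp add: mult_nonpos_nonneg)
    then show ?thesis using False by (simp add: phi_def)
  qed
  have phipos: "phi z > 0" for z
  proof (cases "0 \<le> z")
    case True then show ?thesis by (simp add: phi_def)
  next
    case False
    have gz: "g * z < 0" using False g by (simp add: mult_pos_neg)
    have e1: "exp (- (g * z)) \<ge> 1" using gz by simp
    have e2: "exp (g * z) \<le> 1" using gz by simp
    have "B * exp (g * z) \<ge> B * 1" using B0 e2 by (intro mult_left_mono_neg) auto
    moreover have "A * exp (- (g * z)) \<ge> A" using A1 e1 by simp
    ultimately show ?thesis using False AB by (simp add: phi_def)
  qed
  have phinn: "z \<le> 0 \<Longrightarrow> phi (- z) = exp (g * z)" for z by (simp add: phi_def)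
  have phinn': "0 \<le> z \<Longrightarrow> phi z = exp (- (g * z))" for z by (simp add: phi_def)
  have W: "0 < 2*g + l*r" using g l r by (simp add: add_pos_pos)
  show "sticky_green r l x y \<ge> 0" unfolding G using phipos W
    by (intro divide_nonneg_pos mult_nonneg_nonneg) (auto intro: less_imp_le)
  show "sticky_green r l x 0 = exp (- (sqrt (2*l) * \<bar>x\<bar>)) / (2 * sqrt (2*l) + l * r)"
    unfolding G g_def[symmetric]
    by (cases "0 \<le> x") (simp_all add: phi_def)
  show "sticky_green r l x y \<le> exp (- (sqrt (2*l) * \<bar>x - y\<bar>)) / (2 * sqrt (2*l))"
  proof -
    let ?a = "min x y" and ?b = "max x y"
    have ab: "?a \<le> ?b" by simp
    have dist: "\<bar>x - y\<bar> = ?b - ?a" by auto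
    have key: "phi (- ?a) * phi ?b \<le> A * exp (- (g * (?b - ?a)))"
    proof (cases "0 \<le> ?b")
      case True
      note b = phinn'[OF True]
      show ?thesis
      proof (cases "?a \<le> 0")
        case True
        have "phi (- ?a) * phi ?b = exp (- (g * (?b - ?a)))"
          using b phinn[OF True] by (simp add: exp_add[symmetric] algebra_simps)
        then show ?thesis using A1 by simp
      next
        case False
        have "phi (- ?a) * phi ?b \<le> A * exp (- (g * (- ?a))) * exp (- (g * ?b))"
          using b phiub[of "- ?a"] by (simp add: mult_right_mono)
        also have "\<dots> = A * exp (- (g * (?b - ?a)))"
          by (simp add: mult.assoc exp_add[symmetric] algebra_simps)
        finally show ?thesis .
      qed
    next
      case False
      then have a0: "?a \<le> 0" using ab by linarith
      have "phi (- ?a) * phi ?b \<le> exp (g * ?a) * (A * exp (- (g * ?b)))"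
        using phinn[OF a0] phiub[of "?b"] by (simp add: mult_left_mono)
      also have "\<dots> = A * exp (- (g * (?b - ?a)))"
        by (simp add: exp_add[symmetric] algebra_simps)
      finally show ?thesis .
    qed
    have "sticky_green r l x y = phi (- ?a) * phi ?b / (2 * g * A)" using G WA by simp
    also have "\<dots> \<le> A * exp (- (g * (?b - ?a))) / (2 * g * A)"
      using key g A1 by (intro divide_right_mono) auto
    also have "\<dots> = exp (- (g * \<bar>x - y\<bar>)) / (2 * g)" using A1 dist by simp
    finally show ?thesis by (simp add: g_def)
  qed
qed

lemma refl_bound:
  fixes F :: "real \<Rightarrow> ennreal"
  assumes [measurable]: "F \<in> borel_measurable borel"
  shows "(\<integral>\<^sup>+z. F \<bar>z\<bar> \<partial>lborel) \<le> 2 * (\<integral>\<^sup>+z. F z * indicator {0..} z \<partial>lborel)"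
proof -
  have "(\<integral>\<^sup>+z. F \<bar>z\<bar> \<partial>lborel) \<le> (\<integral>\<^sup>+z. F z * indicator {0..} z + F (- z) * indicator {0..} (- z) \<partial>lborel)"
    by (intro nn_integral_mono) (auto split: split_indicator)
  also have "\<dots> = (\<integral>\<^sup>+z. F z * indicator {0..} z \<partial>lborel) + (\<integral>\<^sup>+z. F (- z) * indicator {0..} (- z) \<partial>lborel)"
    by (intro nn_integral_add) auto
  also have "(\<integral>\<^sup>+z. F (- z) * indicator {0..} (- z) \<partial>lborel) = (\<integral>\<^sup>+z. F z * indicator {0..} z \<partial>lborel)"
    using nn_integral_real_affine[of "\<lambda>z. F z * indicator {0..} z" "-1" 0] by simp
  finally show ?thesis by (simp add: mult_2)
qed

lemma exp_moment_pos:
  fixes g :: real and i :: nat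
  assumes g: "g > 0"
  shows "(\<integral>\<^sup>+z. ennreal (exp (- (g * \<bar>z\<bar>)) * \<bar>z\<bar> ^ i) * indicator {0..} z \<partial>lborel) = ennreal (fact i / g ^ (Suc i))"
proof -
  have "(\<integral>\<^sup>+z. ennreal (exp (- (g * \<bar>z\<bar>)) * \<bar>z\<bar> ^ i) * indicator {0..} z \<partial>lborel)
      = (\<integral>\<^sup>+z. ennreal (1/g) * ennreal (erlang_density 0 g z * z ^ i) \<partial>lborel)"
    using g by (intro nn_integral_cong) (auto simp: erlang_density_def ennreal_mult'[symmetric] split: split_indicator)
  also have "\<dots> = ennreal (1/g) * (\<integral>\<^sup>+z. ennreal (erlang_density 0 g z * z ^ i) \<partial>lborel)"
    by (intro nn_integral_cmult) (auto simp: erlang_density_def)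
  also have "\<dots> = ennreal (fact i / g ^ (Suc i))"
    using g by (subst nn_integral_erlang_ith_moment) (auto simp: ennreal_mult'[symmetric] divide_ennreal)
  finally show ?thesis .
qed

lemma exp_moment:
  fixes g :: real and i :: nat
  assumes g: "g > 0"
  shows "(\<integral>\<^sup>+z. ennreal (exp (- (g * \<bar>z\<bar>)) * \<bar>z\<bar> ^ i) \<partial>lborel) \<le> ennreal (2 * fact i / g ^ (Suc i))"
proof -
  have "(\<integral>\<^sup>+z. ennreal (exp (- (g * \<bar>z\<bar>)) * \<bar>z\<bar> ^ i) \<partial>lborel)
     = (\<integral>\<^sup>+z. (\<lambda>w. ennreal (exp (- (g * \<bar>w\<bar>)) * \<bar>w\<bar> ^ i)) \<bar>z\<bar> \<partial>lborel)" by simp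
  also have "\<dots> \<le> 2 * (\<integral>\<^sup>+z. ennreal (exp (- (g * \<bar>z\<bar>)) * \<bar>z\<bar> ^ i) * indicator {0..} z \<partial>lborel)"
    by (rule refl_bound) measurable
  also have "\<dots> = ennreal 2 * ennreal (fact i / g ^ (Suc i))"
    using g by (simp add: exp_moment_pos del: power_Suc)
  also have "\<dots> = ennreal (2 * fact i / g ^ (Suc i))"
    using g by (subst ennreal_mult[symmetric]) (auto simp del: power_Suc)
  finally show ?thesis .
qed

lemma exp_int0: "g > 0 \<Longrightarrow> (\<integral>\<^sup>+z. ennreal (exp (- (g * \<bar>z\<bar>))) \<partial>lborel) \<le> ennreal (2 / g)"
  using exp_moment[of g 0] by simp

lemma exp_int1: "g > 0 \<Longrightarrow> (\<integral>\<^sup>+z. ennreal (exp (- (g * \<bar>z\<bar>)) * \<bar>z\<bar>) \<partial>lborel) \<le> ennreal (2 / g^2)"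
  using exp_moment[of g 1] by (simp add: power2_eq_square)

lemma resolvent_bound:
  fixes K :: "real \<Rightarrow> real \<Rightarrow> real \<Rightarrow> real measure" and h :: "real \<Rightarrow> real"
  assumes K: "sticky_kernels K" and r: "r > 0" and tau: "\<tau> > 0"
    and hc: "continuous_on UNIV h" and hb: "bounded (range h)" and h0: "h 0 = 0"
  shows "ennreal \<bar>LBINT s=0..1. sticky_P K r (\<tau> * s) h x - h x\<bar> \<le>
    ennreal (exp 1) * ((\<integral>\<^sup>+y. ennreal (sqrt (2/\<tau>) / 2 * exp (- (sqrt (2/\<tau>) * \<bar>x - y\<bar>)) * \<bar>h y - h x\<bar>) \<partial>lborel)
             + ennreal (exp (- (sqrt (2/\<tau>) * \<bar>x\<bar>)) * \<bar>h x\<bar>))"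
proof -
  define l where "l = 1 / \<tau>"
  have l: "l > 0" using tau by (simp add: l_def)
  define g where "g = sqrt (2 * l)"
  have g: "g > 0" using l by (simp add: g_def)
  have gg: "g * g = 2 * l" using l by (simp add: g_def)
  have g2: "sqrt (2/\<tau>) = g" by (simp add: g_def l_def)
  obtain Bh where Bh: "\<And>y. \<bar>h y\<bar> \<le> Bh" using hb unfolding bounded_iff by auto
  define \<phi> where "\<phi> = (\<lambda>y. \<bar>h y - h x\<bar>)"
  have \<phi>c: "continuous_on UNIV \<phi>" unfolding \<phi>_def by (intro continuous_intros hc)
  have \<phi>B: "\<bar>\<phi> y\<bar> \<le> 2 * Bh" for y
  proof -
    have "\<bar>h y - h x\<bar> \<le> \<bar>h y\<bar> + \<bar>h x\<bar>" by (rule abs_triangle_ineq4)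
    also have "\<dots> \<le> 2 * Bh" using Bh[of y] Bh[of x] by simp
    finally show ?thesis unfolding \<phi>_def by simp
  qed
  have \<phi>b: "bounded (range \<phi>)" unfolding bounded_iff using \<phi>B by auto
  have hm[measurable]: "h \<in> borel_measurable borel" by (rule borel_measurable_continuous_onI[OF hc])
  have \<phi>m[measurable]: "\<phi> \<in> borel_measurable borel" by (rule borel_measurable_continuous_onI[OF \<phi>c])
  define u where "u = (\<lambda>t. \<integral>y. \<phi> y \<partial>(K r t x))"
  have K1: "\<forall>r>0. \<forall>t\<ge>0. \<forall>x. prob_space (K r t x) \<and> sets (K r t x) = sets borel"
    using K unfolding sticky_kernels_def by (rule conjunct1)
  have K2: "\<forall>r>0. \<forall>x. \<forall>h::real \<Rightarrow> real. continuous_on UNIV h \<and> bounded (range h) \<longrightarrow>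
        continuous_on {0..} (\<lambda>t. \<integral>y. h y \<partial>(K r t x)) \<and>
        (\<forall>l>0. (LBINT t:{0..}. exp (- (l * t)) * (\<integral>y. h y \<partial>(K r t x))) =
                2 * (LBINT y. sticky_green r l x y * h y) + r * sticky_green r l x 0 * h 0)"
    using K unfolding sticky_kernels_def by (rule conjunct2)
  have Kp: "prob_space (K r t x) \<and> sets (K r t x) = sets borel" if "t \<ge> 0" for t
    using K1 r that by simp
  have K2': "continuous_on {0..} u \<and>
        (\<forall>l>0. (LBINT t:{0..}. exp (- (l * t)) * u t) =
                2 * (LBINT y. sticky_green r l x y * \<phi> y) + r * sticky_green r l x 0 * \<phi> 0)"
    unfolding u_def using K2 r \<phi>c \<phi>b by simp
  have ucont: "continuous_on {0..} u" using K2' by (rule conjunct1)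
  have lap: "(LBINT t:{0..}. exp (- (l * t)) * u t) =
                2 * (LBINT y. sticky_green r l x y * \<phi> y) + r * sticky_green r l x 0 * \<phi> 0"
    using K2' l by simp
  have ubd: "\<bar>sticky_P K r t h x - h x\<bar> \<le> u t \<and> 0 \<le> u t \<and> u t \<le> 2 * Bh" if t: "t \<ge> 0" for t
  proof -
    interpret prob_space "K r t x" using Kp[OF t] by blast
    have sK: "sets (K r t x) = sets borel" using Kp[OF t] by blast
    have hmK: "h \<in> borel_measurable (K r t x)" using measurable_cong_sets[OF sK refl] hm by blast
    have \<phi>mK: "\<phi> \<in> borel_measurable (K r t x)" using measurable_cong_sets[OF sK refl] \<phi>m by blast
    have ih: "integrable (K r t x) h" by (rule integrable_const_bound[where B=Bh]) (auto simp: Bh hmK)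
    have "sticky_P K r t h x - h x = (\<integral>y. h y - h x \<partial>(K r t x))"
      unfolding sticky_P_def using ih by (simp add: prob_space)
    also have "\<bar>\<dots>\<bar> \<le> u t" unfolding u_def \<phi>_def by (rule integral_abs_bound)
    finally have 1: "\<bar>sticky_P K r t h x - h x\<bar> \<le> u t" .
    have 2: "0 \<le> u t" unfolding u_def \<phi>_def by simp
    have i\<phi>: "integrable (K r t x) \<phi>" by (rule integrable_const_bound[where B="2*Bh"]) (auto simp: \<phi>B \<phi>mK)
    have "u t \<le> (\<integral>y. 2 * Bh \<partial>(K r t x))" unfolding u_def
      by (rule integral_mono[OF i\<phi>]) (use \<phi>B in \<open>auto simp: abs_le_iff\<close>)
    then have 3: "u t \<le> 2 * Bh" by (simp add: prob_space)
    show ?thesis using 1 2 3 by blast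
  qed
  have Bh0: "0 \<le> Bh" using Bh[of 0] by simp
  define w where "w = (\<lambda>t. indicator {0..} t *\<^sub>R u t)"
  have wm[measurable]: "w \<in> borel_measurable borel" unfolding w_def
    by (rule borel_measurable_continuous_on_indicator[OF _ ucont]) auto
  have w0: "0 \<le> w t" for t using ubd[of t] by (simp add: w_def split: split_indicator)
  define F where "F = (\<lambda>s. sticky_P K r (\<tau> * s) h x - h x)"
  have eq1: "(LBINT s=0..1. sticky_P K r (\<tau> * s) h x - h x) = (LINT s|lborel. indicator {0..1} s *\<^sub>R F s)"
  proof -
    have e: "(0::ereal) = ereal 0" "(1::ereal) = ereal 1" by simp_all
    show ?thesis unfolding e using interval_integral_Icc[of 0 1 F]
      by (simp add: set_lebesgue_integral_def F_def)
  qed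
  have step1: "ennreal \<bar>LINT s|lborel. indicator {0..1} s *\<^sub>R F s\<bar> \<le> (\<integral>\<^sup>+s. ennreal (indicator {0..1} s * u (\<tau> * s)) \<partial>lborel)"
  proof (cases "integrable lborel (\<lambda>s. indicator {0..1} s *\<^sub>R F s)")
    case True
    have "ennreal \<bar>LINT s|lborel. indicator {0..1} s *\<^sub>R F s\<bar> \<le> (\<integral>\<^sup>+s. norm (indicator {0..1} s *\<^sub>R F s) \<partial>lborel)"
      using integral_norm_bound_ennreal[OF True] by simp
    also have "\<dots> \<le> (\<integral>\<^sup>+s. ennreal (indicator {0..1} s * u (\<tau> * s)) \<partial>lborel)"
    proof (intro nn_integral_mono)
      fix s :: real
      show "ennreal (norm (indicator {0..1} s *\<^sub>R F s)) \<le> ennreal (indicator {0..1} s * u (\<tau> * s))"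
      proof (cases "s \<in> {0..1}")
        case True
        then have "\<tau> * s \<ge> 0" using tau by simp
        then show ?thesis using True ubd[of "\<tau> * s"] by (simp add: F_def)
      qed simp
    qed
    finally show ?thesis .
  qed (simp add: not_integrable_integral_eq)
  have wtm[measurable]: "(\<lambda>s. w (\<tau> * s)) \<in> borel_measurable borel" by measurable
  have step2: "(\<integral>\<^sup>+s. ennreal (indicator {0..1} s * u (\<tau> * s)) \<partial>lborel)
      \<le> (\<integral>\<^sup>+s. ennreal (exp 1) * ennreal (w (\<tau> * s) * exp (- s)) \<partial>lborel)"
  proof (intro nn_integral_mono)
    fix s :: real
    have "indicator {0..1} s * u (\<tau> * s) \<le> exp 1 * (w (\<tau> * s) * exp (- s))"
    proof (cases "s \<in> {0..1}")
      case True
      then have ts: "\<tau> * s \<ge> 0" using tau by simp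
      have wu: "w (\<tau> * s) = u (\<tau> * s)" using ts by (simp add: w_def)
      have "1 \<le> exp 1 * exp (- s)" using True by (simp add: exp_add[symmetric])
      then have "u (\<tau> * s) * 1 \<le> u (\<tau> * s) * (exp 1 * exp (- s))"
        using ubd[OF ts] by (intro mult_left_mono) auto
      then show ?thesis using True wu by (simp add: algebra_simps)
    next
      case False
      then show ?thesis using w0[of "\<tau> * s"] by simp
    qed
    then show "ennreal (indicator {0..1} s * u (\<tau> * s)) \<le> ennreal (exp 1) * ennreal (w (\<tau> * s) * exp (- s))"
      by (subst ennreal_mult[symmetric]) (auto intro: ennreal_leI simp: w0)
  qed
  have step3: "(\<integral>\<^sup>+s. ennreal (exp 1) * ennreal (w (\<tau> * s) * exp (- s)) \<partial>lborel)
      = ennreal (exp 1) * (\<integral>\<^sup>+s. ennreal (w (\<tau> * s) * exp (- s)) \<partial>lborel)"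
    by (rule nn_integral_cmult) measurable
  have step4: "(\<integral>\<^sup>+s. ennreal (w (\<tau> * s) * exp (- s)) \<partial>lborel)
      = ennreal l * (\<integral>\<^sup>+t. ennreal (w t * exp (- (l * t))) \<partial>lborel)"
  proof -
    have "(\<integral>\<^sup>+s. ennreal (w (\<tau> * s) * exp (- s)) \<partial>lborel)
       = ennreal \<bar>l\<bar> * (\<integral>\<^sup>+t. ennreal (w (\<tau> * (0 + l * t)) * exp (- (0 + l * t))) \<partial>lborel)"
      by (rule nn_integral_real_affine) (use l in auto)
    also have "(\<lambda>t. \<tau> * (0 + l * t)) = (\<lambda>t. t)" using tau by (auto simp: l_def)
    finally show ?thesis using l by simp
  qed
  have erl_int: "integrable lborel (erlang_density 0 l)"
  proof (rule integrableI_nonneg)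
    show "AE x in lborel. 0 \<le> erlang_density 0 l x" using l by (auto simp: erlang_density_def)
    have "(\<integral>\<^sup>+ x. ennreal (erlang_density 0 l x) \<partial>lborel) = 1"
      using nn_integral_erlang_ith_moment[OF l, of 0 0] by simp
    then show "(\<integral>\<^sup>+ x. ennreal (erlang_density 0 l x) \<partial>lborel) < \<infinity>" by simp
  qed simp
  have lap_int: "integrable lborel (\<lambda>t. indicator {0..} t *\<^sub>R (exp (- (l * t)) * u t))"
  proof (rule Bochner_Integration.integrable_bound[OF integrable_mult_right[OF erl_int, of "2 * Bh / l"]])
    show "(\<lambda>t. indicator {0..} t *\<^sub>R (exp (- (l * t)) * u t)) \<in> borel_measurable lborel"
    proof -
      have eqn: "(\<lambda>t. indicator {0..} t *\<^sub>R (exp (- (l * t)) * u t)) = (\<lambda>t. exp (- (l * t)) * w t)"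
        by (auto simp: w_def split: split_indicator)
      show ?thesis unfolding eqn by measurable
    qed
    show "AE t in lborel. norm (indicator {0..} t *\<^sub>R (exp (- (l * t)) * u t)) \<le> norm (2 * Bh / l * erlang_density 0 l t)"
    proof (intro AE_I2)
      fix t :: real
      show "norm (indicator {0..} t *\<^sub>R (exp (- (l * t)) * u t)) \<le> norm (2 * Bh / l * erlang_density 0 l t)"
      proof (cases "t \<ge> 0")
        case True
        have "exp (- (l * t)) * u t \<le> exp (- (l * t)) * (2 * Bh)" using ubd[OF True] by simp
        then show ?thesis using True l Bh0 ubd[OF True] by (simp add: erlang_density_def abs_mult)
      qed simp
    qed
  qed
  have step5: "(\<integral>\<^sup>+t. ennreal (w t * exp (- (l * t))) \<partial>lborel) = ennreal (LBINT t:{0..}. exp (- (l * t)) * u t)"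
  proof -
    have "(\<integral>\<^sup>+t. ennreal (w t * exp (- (l * t))) \<partial>lborel) = (\<integral>\<^sup>+t. ennreal (indicator {0..} t *\<^sub>R (exp (- (l * t)) * u t)) \<partial>lborel)"
      by (intro nn_integral_cong) (auto simp: w_def mult.commute split: split_indicator)
    also have "\<dots> = ennreal (LBINT t:{0..}. exp (- (l * t)) * u t)"
      unfolding set_lebesgue_integral_def
      by (rule nn_integral_eq_integral[OF lap_int]) (use ubd in \<open>auto split: split_indicator\<close>)
    finally show ?thesis .
  qed
  define G where "G = (\<lambda>y. sticky_green r l x y)"
  have Gb: "G y \<le> exp (- (g * \<bar>x - y\<bar>)) / (2 * g)" "0 \<le> G y" for y
    using green_bounds(1)[OF r l, of x y] green_bounds(3)[OF r l, of x y] unfolding G_def g_def by auto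
  have G0: "G 0 = exp (- (g * \<bar>x\<bar>)) / (2 * g + l * r)"
    using green_bounds(2)[OF r l, of x] unfolding G_def g_def by auto
  define I where "I = (LBINT y. G y * \<phi> y)"
  define c where "c = r * G 0 * \<phi> 0"
  have c0: "0 \<le> c" unfolding c_def using r Gb(2)[of 0] by (simp add: \<phi>_def)
  have lap': "(LBINT t:{0..}. exp (- (l * t)) * u t) = 2 * I + c"
    using lap unfolding I_def c_def G_def by simp
  have step7: "ennreal (2 * I + c) \<le> 2 * ennreal \<bar>I\<bar> + ennreal c"
  proof -
    have "ennreal (2 * I + c) \<le> ennreal (2 * \<bar>I\<bar> + c)" by (intro ennreal_leI) simp
    also have "\<dots> = ennreal (2 * \<bar>I\<bar>) + ennreal c" by (rule ennreal_plus) (auto simp: c0)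
    also have "ennreal (2 * \<bar>I\<bar>) = 2 * ennreal \<bar>I\<bar>" by (simp add: ennreal_mult)
    finally show ?thesis .
  qed
  define Eb where "Eb = (\<lambda>y. exp (- (g * \<bar>x - y\<bar>)) / (2 * g) * \<phi> y)"
  have Ebm[measurable]: "Eb \<in> borel_measurable borel" unfolding Eb_def by measurable
  have step8: "ennreal \<bar>I\<bar> \<le> (\<integral>\<^sup>+y. ennreal (Eb y) \<partial>lborel)"
  proof (cases "integrable lborel (\<lambda>y. G y * \<phi> y)")
    case True
    have "ennreal \<bar>I\<bar> \<le> (\<integral>\<^sup>+y. norm (G y * \<phi> y) \<partial>lborel)"
      using integral_norm_bound_ennreal[OF True] unfolding I_def by simp
    also have "\<dots> \<le> (\<integral>\<^sup>+y. ennreal (Eb y) \<partial>lborel)"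
    proof (intro nn_integral_mono ennreal_leI)
      fix y
      have "\<phi> y \<ge> 0" by (simp add: \<phi>_def)
      then have "G y * \<phi> y \<le> exp (- (g * \<bar>x - y\<bar>)) / (2 * g) * \<phi> y"
        using Gb[of y] by (intro mult_right_mono) auto
      then show "norm (G y * \<phi> y) \<le> Eb y"
        unfolding Eb_def using Gb(2)[of y] \<open>\<phi> y \<ge> 0\<close> by (simp add: abs_mult)
    qed
    finally show ?thesis .
  qed (simp add: I_def not_integrable_integral_eq)
  have step9a: "ennreal l * (2 * (\<integral>\<^sup>+y. ennreal (Eb y) \<partial>lborel))
      = (\<integral>\<^sup>+y. ennreal (g / 2 * exp (- (g * \<bar>x - y\<bar>)) * \<bar>h y - h x\<bar>) \<partial>lborel)"
  proof -
    have "ennreal l * (2 * (\<integral>\<^sup>+y. ennreal (Eb y) \<partial>lborel)) = ennreal (2 * l) * (\<integral>\<^sup>+y. ennreal (Eb y) \<partial>lborel)"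
      using l by (simp add: ennreal_mult mult.assoc mult.left_commute)
    also have "\<dots> = (\<integral>\<^sup>+y. ennreal (2 * l) * ennreal (Eb y) \<partial>lborel)"
      by (rule nn_integral_cmult[symmetric]) measurable
    also have "\<dots> = (\<integral>\<^sup>+y. ennreal (g / 2 * exp (- (g * \<bar>x - y\<bar>)) * \<bar>h y - h x\<bar>) \<partial>lborel)"
    proof (intro nn_integral_cong)
      fix y
      have "2 * l * Eb y = g / 2 * exp (- (g * \<bar>x - y\<bar>)) * \<bar>h y - h x\<bar>"
        unfolding Eb_def \<phi>_def using g gg[symmetric] by (simp add: field_simps)
      moreover have "ennreal (2 * l) * ennreal (Eb y) = ennreal (2 * l * Eb y)"
        using l g by (intro ennreal_mult[symmetric]) (auto simp: Eb_def \<phi>_def)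
      ultimately show "ennreal (2 * l) * ennreal (Eb y) = ennreal (g / 2 * exp (- (g * \<bar>x - y\<bar>)) * \<bar>h y - h x\<bar>)"
        by (simp only:)
    qed
    finally show ?thesis .
  qed
  have step9b: "ennreal l * ennreal c \<le> ennreal (exp (- (g * \<bar>x\<bar>)) * \<bar>h x\<bar>)"
  proof -
    have W: "0 < 2 * g + l * r" using g l r by (simp add: add_pos_pos)
    have fr: "l * r / (2 * g + l * r) \<le> 1" using W g by simp
    have "l * c = (l * r / (2 * g + l * r)) * (exp (- (g * \<bar>x\<bar>)) * \<bar>h x\<bar>)"
      unfolding c_def G0 \<phi>_def using h0 by simp
    also have "\<dots> \<le> 1 * (exp (- (g * \<bar>x\<bar>)) * \<bar>h x\<bar>)"
      by (intro mult_right_mono fr) auto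
    finally have "l * c \<le> exp (- (g * \<bar>x\<bar>)) * \<bar>h x\<bar>" by simp
    then show ?thesis using l c0 by (simp add: ennreal_mult[symmetric] ennreal_leI)
  qed
  have "ennreal \<bar>LBINT s=0..1. sticky_P K r (\<tau> * s) h x - h x\<bar>
      \<le> ennreal (exp 1) * (ennreal l * ennreal (2 * I + c))"
    using eq1 step1 step2 step3 step4 step5 lap' by simp
  also have "\<dots> \<le> ennreal (exp 1) * (ennreal l * (2 * (\<integral>\<^sup>+y. ennreal (Eb y) \<partial>lborel) + ennreal c))"
    using step7 step8 by (intro mult_left_mono add_mono order.trans[OF step7]) auto
  also have "\<dots> = ennreal (exp 1) * (ennreal l * (2 * (\<integral>\<^sup>+y. ennreal (Eb y) \<partial>lborel)) + ennreal l * ennreal c)"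
    by (simp add: distrib_left)
  also have "\<dots> \<le> ennreal (exp 1) * ((\<integral>\<^sup>+y. ennreal (g / 2 * exp (- (g * \<bar>x - y\<bar>)) * \<bar>h y - h x\<bar>) \<partial>lborel)
             + ennreal (exp (- (g * \<bar>x\<bar>)) * \<bar>h x\<bar>))"
    unfolding step9a using step9b by (intro mult_left_mono add_mono) auto
  finally show ?thesis unfolding g2 .
qed

lemma D_bound:
  fixes h :: "real \<Rightarrow> real"
  assumes hm[measurable]: "h \<in> borel_measurable borel"
    and hL: "\<And>x y. \<bar>h x - h y\<bar> \<le> L * \<bar>x - y\<bar>" and L: "L \<ge> 0"
    and hM: "(\<integral>\<^sup>+x. ennreal \<bar>h x\<bar> \<partial>lborel) \<le> ennreal M" and M: "M \<ge> 0"
    and R: "R > 0"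
  shows "(\<integral>\<^sup>+x. ennreal \<bar>h (x + z) - h x\<bar> \<partial>lborel)
     \<le> ennreal ((2 * R * L + 4 * M / R) * \<bar>z\<bar>) + 2 * (\<integral>\<^sup>+x. ennreal \<bar>h x\<bar> * indicator {x. R/2 \<le> \<bar>x\<bar>} x \<partial>lborel)"
proof -
  define Tl where "Tl = (\<integral>\<^sup>+x. ennreal \<bar>h x\<bar> * indicator {x. R/2 \<le> \<bar>x\<bar>} x \<partial>lborel)"
  have S[measurable]: "{x::real. R/2 \<le> \<bar>x\<bar>} \<in> sets borel"
    by (rule borel_closed) (intro closed_Collect_le continuous_intros)
  have shift: "(\<integral>\<^sup>+x. f (x + z) \<partial>lborel) = (\<integral>\<^sup>+x. f x \<partial>lborel)" if [measurable]: "f \<in> borel_measurable borel" for f :: "real \<Rightarrow> ennreal"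
    using nn_integral_real_affine[of f 1 z] by (simp add: add.commute)
  show ?thesis
  proof (cases "\<bar>z\<bar> \<le> R / 2")
    case True
    have "(\<integral>\<^sup>+x. ennreal \<bar>h (x + z) - h x\<bar> \<partial>lborel)
       \<le> (\<integral>\<^sup>+x. ennreal (L * \<bar>z\<bar>) * indicator {-R..R} x
              + (ennreal \<bar>h (x + z)\<bar> * indicator {x. R/2 \<le> \<bar>x\<bar>} (x + z)
              + ennreal \<bar>h x\<bar> * indicator {x. R/2 \<le> \<bar>x\<bar>} x) \<partial>lborel)"
    proof (intro nn_integral_mono)
      fix x :: real
      show "ennreal \<bar>h (x + z) - h x\<bar> \<le> ennreal (L * \<bar>z\<bar>) * indicator {-R..R} x
              + (ennreal \<bar>h (x + z)\<bar> * indicator {x. R/2 \<le> \<bar>x\<bar>} (x + z)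
              + ennreal \<bar>h x\<bar> * indicator {x. R/2 \<le> \<bar>x\<bar>} x)"
      proof (cases "\<bar>x\<bar> \<le> R")
        case True
        have ind: "indicator {-R..R} x = (1::ennreal)" using True by (simp add: abs_le_iff)
        have "\<bar>h (x + z) - h x\<bar> \<le> L * \<bar>z\<bar>" using hL[of "x + z" x] by simp
        then have "ennreal \<bar>h (x + z) - h x\<bar> \<le> ennreal (L * \<bar>z\<bar>) * indicator {-R..R} x"
          unfolding ind by (simp add: ennreal_leI)
        then show ?thesis by (rule order.trans) (simp add: add.assoc)
      next
        case False
        have tri: "\<bar>x\<bar> \<le> \<bar>x + z\<bar> + \<bar>z\<bar>" using abs_triangle_ineq[of "x + z" "- z"] by simp
        have i1: "R/2 \<le> \<bar>x + z\<bar>" "R/2 \<le> \<bar>x\<bar>" using \<open>\<bar>z\<bar> \<le> R / 2\<close> tri False R by linarith+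
        have "ennreal \<bar>h (x + z) - h x\<bar> \<le> ennreal (\<bar>h (x + z)\<bar> + \<bar>h x\<bar>)"
          by (intro ennreal_leI abs_triangle_ineq4)
        also have "\<dots> = ennreal \<bar>h (x + z)\<bar> + ennreal \<bar>h x\<bar>" by (rule ennreal_plus) auto
        also have "\<dots> = ennreal \<bar>h (x + z)\<bar> * indicator {x. R/2 \<le> \<bar>x\<bar>} (x + z)
              + ennreal \<bar>h x\<bar> * indicator {x. R/2 \<le> \<bar>x\<bar>} x" using i1 by simp
        also have "\<dots> \<le> ennreal (L * \<bar>z\<bar>) * indicator {-R..R} x + (ennreal \<bar>h (x + z)\<bar> * indicator {x. R/2 \<le> \<bar>x\<bar>} (x + z)
              + ennreal \<bar>h x\<bar> * indicator {x. R/2 \<le> \<bar>x\<bar>} x)" by simp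
        finally show ?thesis .
      qed
    qed
    also have "\<dots> = (\<integral>\<^sup>+x. ennreal (L * \<bar>z\<bar>) * indicator {-R..R} x \<partial>lborel)
              + ((\<integral>\<^sup>+x. ennreal \<bar>h (x + z)\<bar> * indicator {x. R/2 \<le> \<bar>x\<bar>} (x + z) \<partial>lborel)
              + (\<integral>\<^sup>+x. ennreal \<bar>h x\<bar> * indicator {x. R/2 \<le> \<bar>x\<bar>} x \<partial>lborel))"
    proof -
      have m1: "(\<lambda>x. ennreal (L * \<bar>z\<bar>) * indicator {-R..R} x) \<in> borel_measurable lborel" by measurable
      have m2: "(\<lambda>x. ennreal \<bar>h (x + z)\<bar> * indicator {x. R/2 \<le> \<bar>x\<bar>} (x + z)) \<in> borel_measurable lborel" by measurable
      have m3: "(\<lambda>x. ennreal \<bar>h x\<bar> * indicator {x. R/2 \<le> \<bar>x\<bar>} x) \<in> borel_measurable lborel" by measurable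
      show ?thesis using nn_integral_add[OF m1 borel_measurable_add[OF m2 m3]] nn_integral_add[OF m2 m3] by simp
    qed
    also have "(\<integral>\<^sup>+x. ennreal \<bar>h (x + z)\<bar> * indicator {x. R/2 \<le> \<bar>x\<bar>} (x + z) \<partial>lborel) = Tl"
      unfolding Tl_def by (rule shift[of "\<lambda>x. ennreal \<bar>h x\<bar> * indicator {x. R/2 \<le> \<bar>x\<bar>} x"]) measurable
    also have "(\<integral>\<^sup>+x. ennreal (L * \<bar>z\<bar>) * indicator {-R..R} x \<partial>lborel) = ennreal (L * \<bar>z\<bar>) * ennreal (2 * R)"
      using R by (subst nn_integral_cmult_indicator) auto
    also have "ennreal (L * \<bar>z\<bar>) * ennreal (2 * R) = ennreal (2 * R * L * \<bar>z\<bar>)"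
      using R L by (subst ennreal_mult[symmetric]) (auto simp: algebra_simps)
    finally have A: "(\<integral>\<^sup>+x. ennreal \<bar>h (x + z) - h x\<bar> \<partial>lborel) \<le> ennreal (2 * R * L * \<bar>z\<bar>) + (Tl + Tl)"
      by (simp only: Tl_def)
    have "ennreal (2 * R * L * \<bar>z\<bar>) \<le> ennreal ((2 * R * L + 4 * M / R) * \<bar>z\<bar>)"
      using R M by (intro ennreal_leI mult_right_mono) auto
    then have "(\<integral>\<^sup>+x. ennreal \<bar>h (x + z) - h x\<bar> \<partial>lborel) \<le> ennreal ((2 * R * L + 4 * M / R) * \<bar>z\<bar>) + (Tl + Tl)"
      using A by (meson add_right_mono order.trans)
    then show ?thesis unfolding Tl_def[symmetric] by (simp only: mult_2)
  next
    case False
    have "(\<integral>\<^sup>+x. ennreal \<bar>h (x + z) - h x\<bar> \<partial>lborel) \<le> (\<integral>\<^sup>+x. ennreal \<bar>h (x + z)\<bar> + ennreal \<bar>h x\<bar> \<partial>lborel)"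
    proof (intro nn_integral_mono)
      fix x
      have "ennreal \<bar>h (x + z) - h x\<bar> \<le> ennreal (\<bar>h (x + z)\<bar> + \<bar>h x\<bar>)"
        by (intro ennreal_leI abs_triangle_ineq4)
      then show "ennreal \<bar>h (x + z) - h x\<bar> \<le> ennreal \<bar>h (x + z)\<bar> + ennreal \<bar>h x\<bar>"
        by (subst (asm) ennreal_plus) auto
    qed
    also have "\<dots> = (\<integral>\<^sup>+x. ennreal \<bar>h (x + z)\<bar> \<partial>lborel) + (\<integral>\<^sup>+x. ennreal \<bar>h x\<bar> \<partial>lborel)"
      by (rule nn_integral_add) measurable
    also have "(\<integral>\<^sup>+x. ennreal \<bar>h (x + z)\<bar> \<partial>lborel) = (\<integral>\<^sup>+x. ennreal \<bar>h x\<bar> \<partial>lborel)"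
      by (rule shift[of "\<lambda>x. ennreal \<bar>h x\<bar>"]) measurable
    also have "(\<integral>\<^sup>+x. ennreal \<bar>h x\<bar> \<partial>lborel) + (\<integral>\<^sup>+x. ennreal \<bar>h x\<bar> \<partial>lborel) \<le> ennreal M + ennreal M"
      using hM by (intro add_mono)
    also have "\<dots> = ennreal (2 * M)" using M by (metis ennreal_plus mult_2)
    also have "\<dots> \<le> ennreal ((2 * R * L + 4 * M / R) * \<bar>z\<bar>)"
    proof (intro ennreal_leI)
      have "2 * M = (4 * M / R) * (R / 2)" using R by simp
      also have "\<dots> \<le> (4 * M / R) * \<bar>z\<bar>" using False M R by (intro mult_left_mono) auto
      also have "\<dots> \<le> (2 * R * L + 4 * M / R) * \<bar>z\<bar>" using R L by (intro mult_right_mono) auto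
      finally show "2 * M \<le> (2 * R * L + 4 * M / R) * \<bar>z\<bar>" .
    qed
    finally show ?thesis by (rule order.trans) simp
  qed
qed

lemma analysis_bound:
  fixes h :: "real \<Rightarrow> real"
  assumes hm[measurable]: "h \<in> borel_measurable borel"
    and hB: "\<And>x. \<bar>h x\<bar> \<le> B"
    and hL: "\<And>x y. \<bar>h x - h y\<bar> \<le> L * \<bar>x - y\<bar>" and L: "L \<ge> 0"
    and hz: "\<And>x. \<bar>x\<bar> < c \<Longrightarrow> h x = 0" and c: "c > 0"
    and hM: "(\<integral>\<^sup>+x. ennreal \<bar>h x\<bar> \<partial>lborel) \<le> ennreal M" and M: "M \<ge> 0"
    and g: "g > 0" and R: "R > 0"
  shows "(\<integral>\<^sup>+x. (\<integral>\<^sup>+y. ennreal (g / 2 * exp (- (g * \<bar>x - y\<bar>)) * \<bar>h y - h x\<bar>) \<partial>lborel)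
              + ennreal (exp (- (g * \<bar>x\<bar>)) * \<bar>h x\<bar>) \<partial>lborel)
    \<le> ennreal ((2 * R * L + 4 * M / R) / g) + 2 * (\<integral>\<^sup>+x. ennreal \<bar>h x\<bar> * indicator {x. R/2 \<le> \<bar>x\<bar>} x \<partial>lborel)
       + ennreal (2 * B / (c * g^2))"
proof -
  define Tl where "Tl = (\<integral>\<^sup>+x. ennreal \<bar>h x\<bar> * indicator {x. R/2 \<le> \<bar>x\<bar>} x \<partial>lborel)"
  define Cr where "Cr = 2 * R * L + 4 * M / R"
  have Cr0: "Cr \<ge> 0" unfolding Cr_def using R L M by simp
  have B0: "B \<ge> 0" using hB[of 0] by simp
  define \<Phi> where "\<Phi> = (\<lambda>x y. ennreal (g / 2 * exp (- (g * \<bar>x - y\<bar>)) * \<bar>h y - h x\<bar>))"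
  have \<Phi>m[measurable]: "case_prod \<Phi> \<in> borel_measurable (lborel \<Otimes>\<^sub>M lborel)" unfolding \<Phi>_def by measurable
  define \<Psi> where "\<Psi> = (\<lambda>x z. ennreal (g / 2 * exp (- (g * \<bar>z\<bar>)) * \<bar>h (x + z) - h x\<bar>))"
  have \<Psi>m[measurable]: "case_prod \<Psi> \<in> borel_measurable (lborel \<Otimes>\<^sub>M lborel)" unfolding \<Psi>_def by measurable
  have split: "(\<integral>\<^sup>+x. (\<integral>\<^sup>+y. \<Phi> x y \<partial>lborel) + ennreal (exp (- (g * \<bar>x\<bar>)) * \<bar>h x\<bar>) \<partial>lborel)
     = (\<integral>\<^sup>+x. (\<integral>\<^sup>+y. \<Phi> x y \<partial>lborel) \<partial>lborel) + (\<integral>\<^sup>+x. ennreal (exp (- (g * \<bar>x\<bar>)) * \<bar>h x\<bar>) \<partial>lborel)"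
    by (rule nn_integral_add) measurable
  have T1a: "(\<integral>\<^sup>+x. (\<integral>\<^sup>+y. \<Phi> x y \<partial>lborel) \<partial>lborel) = (\<integral>\<^sup>+x. (\<integral>\<^sup>+z. \<Psi> x z \<partial>lborel) \<partial>lborel)"
  proof (rule nn_integral_cong)
    fix x :: real
    have "(\<integral>\<^sup>+y. \<Phi> x y \<partial>lborel) = ennreal \<bar>1\<bar> * (\<integral>\<^sup>+z. \<Phi> x (x + 1 * z) \<partial>lborel)"
      by (rule nn_integral_real_affine) (auto simp: \<Phi>_def)
    then show "(\<integral>\<^sup>+y. \<Phi> x y \<partial>lborel) = (\<integral>\<^sup>+z. \<Psi> x z \<partial>lborel)"
      by (simp add: \<Phi>_def \<Psi>_def)
  qed
  also have "\<dots> = (\<integral>\<^sup>+z. (\<integral>\<^sup>+x. \<Psi> x z \<partial>lborel) \<partial>lborel)"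
    by (rule lborel_pair.Fubini'[symmetric]) (rule \<Psi>m)
  also have "\<dots> \<le> (\<integral>\<^sup>+z. ennreal (g / 2 * Cr) * ennreal (exp (- (g * \<bar>z\<bar>)) * \<bar>z\<bar>)
                      + (2 * Tl) * ennreal (g / 2 * exp (- (g * \<bar>z\<bar>))) \<partial>lborel)"
  proof (intro nn_integral_mono)
    fix z :: real
    have "(\<integral>\<^sup>+x. \<Psi> x z \<partial>lborel) = (\<integral>\<^sup>+x. ennreal (g / 2 * exp (- (g * \<bar>z\<bar>))) * ennreal \<bar>h (x + z) - h x\<bar> \<partial>lborel)"
      unfolding \<Psi>_def using g by (intro nn_integral_cong) (simp add: ennreal_mult[symmetric])
    also have "\<dots> = ennreal (g / 2 * exp (- (g * \<bar>z\<bar>))) * (\<integral>\<^sup>+x. ennreal \<bar>h (x + z) - h x\<bar> \<partial>lborel)"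
      by (rule nn_integral_cmult) measurable
    also have "\<dots> \<le> ennreal (g / 2 * exp (- (g * \<bar>z\<bar>))) * (ennreal (Cr * \<bar>z\<bar>) + 2 * Tl)"
      unfolding Cr_def Tl_def by (intro mult_left_mono D_bound[OF hm hL L hM M R]) auto
    also have "\<dots> = ennreal (g / 2 * exp (- (g * \<bar>z\<bar>))) * ennreal (Cr * \<bar>z\<bar>) + (2 * Tl) * ennreal (g / 2 * exp (- (g * \<bar>z\<bar>)))"
      by (simp add: distrib_left distrib_right mult.commute)
    also have "ennreal (g / 2 * exp (- (g * \<bar>z\<bar>))) * ennreal (Cr * \<bar>z\<bar>) = ennreal (g / 2 * Cr) * ennreal (exp (- (g * \<bar>z\<bar>)) * \<bar>z\<bar>)"
      using g Cr0 by (simp add: ennreal_mult[symmetric] mult_ac)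
    finally show "(\<integral>\<^sup>+x. \<Psi> x z \<partial>lborel) \<le> ennreal (g / 2 * Cr) * ennreal (exp (- (g * \<bar>z\<bar>)) * \<bar>z\<bar>)
                      + (2 * Tl) * ennreal (g / 2 * exp (- (g * \<bar>z\<bar>)))" .
  qed
  also have "\<dots> = ennreal (g / 2 * Cr) * (\<integral>\<^sup>+z. ennreal (exp (- (g * \<bar>z\<bar>)) * \<bar>z\<bar>) \<partial>lborel)
                  + (2 * Tl) * (\<integral>\<^sup>+z. ennreal (g / 2 * exp (- (g * \<bar>z\<bar>))) \<partial>lborel)"
    by (subst nn_integral_add) (auto simp: nn_integral_cmult)
  also have "\<dots> \<le> ennreal (g / 2 * Cr) * ennreal (2 / g^2) + (2 * Tl) * 1"
  proof (intro add_mono mult_left_mono)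
    show "(\<integral>\<^sup>+z. ennreal (exp (- (g * \<bar>z\<bar>)) * \<bar>z\<bar>) \<partial>lborel) \<le> ennreal (2 / g^2)" by (rule exp_int1[OF g])
    have "(\<integral>\<^sup>+z. ennreal (g / 2 * exp (- (g * \<bar>z\<bar>))) \<partial>lborel) = ennreal (g / 2) * (\<integral>\<^sup>+z. ennreal (exp (- (g * \<bar>z\<bar>))) \<partial>lborel)"
      using g by (subst nn_integral_cmult[symmetric]) (auto simp: ennreal_mult[symmetric] intro!: nn_integral_cong)
    also have "\<dots> \<le> ennreal (g / 2) * ennreal (2 / g)" by (intro mult_left_mono exp_int0[OF g]) auto
    also have "\<dots> = 1" using g by (simp add: ennreal_mult[symmetric])
    finally show "(\<integral>\<^sup>+z. ennreal (g / 2 * exp (- (g * \<bar>z\<bar>))) \<partial>lborel) \<le> 1" .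
  qed auto
  also have "\<dots> = ennreal (Cr / g) + 2 * Tl"
    using g Cr0 by (simp add: ennreal_mult[symmetric] power2_eq_square)
  finally have T1: "(\<integral>\<^sup>+x. (\<integral>\<^sup>+y. \<Phi> x y \<partial>lborel) \<partial>lborel) \<le> ennreal (Cr / g) + 2 * Tl" .
  have "(\<integral>\<^sup>+x. ennreal (exp (- (g * \<bar>x\<bar>)) * \<bar>h x\<bar>) \<partial>lborel)
      \<le> (\<integral>\<^sup>+x. ennreal (B / c) * ennreal (exp (- (g * \<bar>x\<bar>)) * \<bar>x\<bar>) \<partial>lborel)"
  proof (intro nn_integral_mono)
    fix x :: real
    have "exp (- (g * \<bar>x\<bar>)) * \<bar>h x\<bar> \<le> B / c * (exp (- (g * \<bar>x\<bar>)) * \<bar>x\<bar>)"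
    proof (cases "\<bar>x\<bar> < c")
      case True then show ?thesis using hz[OF True] B0 c by simp
    next
      case False
      have "\<bar>h x\<bar> \<le> B / c * \<bar>x\<bar>"
      proof -
        have "B = B / c * c" using c by simp
        also have "\<dots> \<le> B / c * \<bar>x\<bar>" using False B0 c by (intro mult_left_mono) auto
        finally show ?thesis using hB[of x] by linarith
      qed
      then have "exp (- (g * \<bar>x\<bar>)) * \<bar>h x\<bar> \<le> exp (- (g * \<bar>x\<bar>)) * (B / c * \<bar>x\<bar>)"
        by (intro mult_left_mono) auto
      then show ?thesis by (simp add: mult_ac)
    qed
    then show "ennreal (exp (- (g * \<bar>x\<bar>)) * \<bar>h x\<bar>) \<le> ennreal (B / c) * ennreal (exp (- (g * \<bar>x\<bar>)) * \<bar>x\<bar>)"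
      using B0 c by (subst ennreal_mult[symmetric]) (auto intro: ennreal_leI)
  qed
  also have "\<dots> = ennreal (B / c) * (\<integral>\<^sup>+x. ennreal (exp (- (g * \<bar>x\<bar>)) * \<bar>x\<bar>) \<partial>lborel)"
    by (rule nn_integral_cmult) measurable
  also have "\<dots> \<le> ennreal (B / c) * ennreal (2 / g^2)" by (intro mult_left_mono exp_int1[OF g]) auto
  also have "\<dots> = ennreal (2 * B / (c * g^2))" using B0 c g by (simp add: ennreal_mult[symmetric])
  finally have T2: "(\<integral>\<^sup>+x. ennreal (exp (- (g * \<bar>x\<bar>)) * \<bar>h x\<bar>) \<partial>lborel) \<le> ennreal (2 * B / (c * g^2))" .
  show ?thesis
    using split T1 T2 add_mono[OF T1 T2] unfolding \<Phi>_def Tl_def Cr_def by simp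
qed

lemma mvt_lower:
  fixes S S' :: "real \<Rightarrow> real"
  assumes dS: "\<And>x. (S has_real_derivative S' x) (at x)" and lo: "\<And>x. e \<le> S' x" and xy: "x \<le> y"
  shows "e * (y - x) \<le> S y - S x"
proof (cases "x = y")
  case False
  then have "x < y" using xy by simp
  from MVT2[OF this dS] obtain z where "S y - S x = (y - x) * S' z" by blast
  moreover have "(y - x) * e \<le> (y - x) * S' z" using xy lo[of z] by (intro mult_left_mono) auto
  ultimately show ?thesis by (simp add: mult.commute)
qed simp

lemma mvt_abs:
  fixes S S' :: "real \<Rightarrow> real"
  assumes dS: "\<And>x. (S has_real_derivative S' x) (at x)" and up: "\<And>x. \<bar>S' x\<bar> \<le> C"
  shows "\<bar>S y - S x\<bar> \<le> C * \<bar>y - x\<bar>"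
proof -
  have main: "\<bar>S v - S u\<bar> \<le> C * (v - u)" if "u < v" for u v
  proof -
    from MVT2[OF that dS] obtain z where "S v - S u = (v - u) * S' z" by blast
    then have "\<bar>S v - S u\<bar> = (v - u) * \<bar>S' z\<bar>" using that by (simp add: abs_mult)
    also have "\<dots> \<le> (v - u) * C" using that up[of z] by (intro mult_left_mono) auto
    finally show ?thesis by (simp add: mult.commute)
  qed
  show ?thesis
  proof (cases x y rule: linorder_cases)
    case less then show ?thesis using main[OF less] by simp
  next
    case greater then show ?thesis using main[OF greater] by (simp add: abs_minus_commute)
  qed simp
qed

lemma cov_pos:
  fixes S S' f :: "real \<Rightarrow> real"
  assumes dS: "\<And>x. (S has_real_derivative S' x) (at x)" and cS': "continuous_on UNIV S'"
    and lo: "\<And>x. e \<le> S' x" and e: "e > 0" and S0: "S 0 = 0"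
    and fm[measurable]: "f \<in> borel_measurable borel"
    and a: "a \<ge> 0"
  shows "(\<integral>\<^sup>+x. ennreal (f (S x)) * indicator {a..} x \<partial>lborel)
     \<le> ennreal (1/e) * (\<integral>\<^sup>+u. ennreal (f u) * indicator {e*a..} u \<partial>lborel)"
proof -
  have Sc: "continuous_on UNIV S" by (rule DERIV_continuous_on) (use dS in \<open>auto intro: has_field_derivative_at_within\<close>)
  have Sm[measurable]: "S \<in> borel_measurable borel" by (rule borel_measurable_continuous_onI[OF Sc])
  have S'm[measurable]: "S' \<in> borel_measurable borel" by (rule borel_measurable_continuous_onI[OF cS'])
  have S'nn: "0 \<le> S' x" for x using lo[of x] e by linarith
  have Sa: "e * a \<le> S a" using mvt_lower[OF dS lo a] S0 by simp
  define X where "X = (\<lambda>m::nat. \<integral>\<^sup>+x. ennreal (f (S x)) * indicator {a..a + real m + 1} x \<partial>lborel)"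
  have lim: "X \<longlonglongrightarrow> (\<integral>\<^sup>+x. ennreal (f (S x)) * indicator {a..} x \<partial>lborel)"
    unfolding X_def
  proof (rule nn_integral_LIMSEQ)
    show "incseq (\<lambda>m x. ennreal (f (S x)) * indicator {a..a + real m + 1} x)"
    proof (rule incseq_SucI, rule le_funI)
      fix m x
      have "indicator {a..a + real m + 1} x \<le> (indicator {a..a + real (Suc m) + 1} x :: ennreal)"
        by (auto split: split_indicator)
      then show "ennreal (f (S x)) * indicator {a..a + real m + 1} x \<le> ennreal (f (S x)) * indicator {a..a + real (Suc m) + 1} x"
        by (rule mult_left_mono) simp
    qed
    show "\<And>m. (\<lambda>x. ennreal (f (S x)) * indicator {a..a + real m + 1} x) \<in> borel_measurable lborel" by measurable
    fix x :: real
    obtain N :: nat where N: "x \<le> real N" using real_arch_simple by blast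
    have "\<forall>m\<ge>N. ennreal (f (S x)) * indicator {a..a + real m + 1} x = ennreal (f (S x)) * indicator {a..} x"
    proof (intro allI impI)
      fix m assume "N \<le> m"
      then have "x \<le> a + real m + 1" using N a by (smt (verit) of_nat_mono)
      then show "ennreal (f (S x)) * indicator {a..a + real m + 1} x = ennreal (f (S x)) * indicator {a..} x"
        by (auto split: split_indicator)
    qed
    then show "(\<lambda>m. ennreal (f (S x)) * indicator {a..a + real m + 1} x) \<longlonglongrightarrow> ennreal (f (S x)) * indicator {a..} x"
      by (intro tendsto_eventually) (auto simp: eventually_sequentially)
  qed
  have bnd: "X m \<le> ennreal (1/e) * (\<integral>\<^sup>+u. ennreal (f u) * indicator {e*a..} u \<partial>lborel)" for m
  proof -
    define b where "b = a + real m + 1"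
    have ab: "a < b" by (simp add: b_def)
    have "X m \<le> (\<integral>\<^sup>+x. ennreal (1/e) * (ennreal (f (S x)) * ennreal (S' x) * indicator {a..b} x) \<partial>lborel)"
      unfolding X_def b_def[symmetric]
    proof (intro nn_integral_mono)
      fix x
      have "1 \<le> (1/e) * S' x" using lo[of x] e by (simp add: field_simps)
      then have "ennreal 1 \<le> ennreal (1/e) * ennreal (S' x)" using e lo[of x]
        by (subst ennreal_mult[symmetric]) (simp_all add: ennreal_leI)
      then have "ennreal (f (S x)) * 1 \<le> ennreal (f (S x)) * (ennreal (1/e) * ennreal (S' x))"
        by (intro mult_left_mono) auto
      then show "ennreal (f (S x)) * indicator {a..b} x \<le> ennreal (1/e) * (ennreal (f (S x)) * ennreal (S' x) * indicator {a..b} x)"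
        by (auto simp: mult_ac split: split_indicator)
    qed
    also have "\<dots> = ennreal (1/e) * (\<integral>\<^sup>+x. ennreal (f (S x)) * ennreal (S' x) * indicator {a..b} x \<partial>lborel)"
      by (rule nn_integral_cmult) measurable
    also have "(\<integral>\<^sup>+x. ennreal (f (S x)) * ennreal (S' x) * indicator {a..b} x \<partial>lborel)
        = (\<integral>\<^sup>+u. ennreal (f u) * indicator {S a..S b} u \<partial>lborel)"
      by (rule nn_integral_substitution_aux[where f="\<lambda>u. ennreal (f u)", symmetric])
        (use ab dS S'nn continuous_on_subset[OF cS' subset_UNIV] in auto)
    finally have X1: "X m \<le> ennreal (1/e) * (\<integral>\<^sup>+u. ennreal (f u) * indicator {S a..S b} u \<partial>lborel)" .
    have "(\<integral>\<^sup>+u. ennreal (f u) * indicator {S a..S b} u \<partial>lborel) \<le> (\<integral>\<^sup>+u. ennreal (f u) * indicator {e*a..} u \<partial>lborel)"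
      using Sa by (intro nn_integral_mono) (auto split: split_indicator)
    then show ?thesis using X1 by (meson mult_left_mono order.trans zero_le)
  qed
  show ?thesis by (rule LIMSEQ_le_const2[OF lim]) (use bnd in blast)
qed

lemma cov_tail:
  fixes S S' f :: "real \<Rightarrow> real"
  assumes dS: "\<And>x. (S has_real_derivative S' x) (at x)" and cS': "continuous_on UNIV S'"
    and lo: "\<And>x. e \<le> S' x" and e: "e > 0" and S0: "S 0 = 0"
    and fm[measurable]: "f \<in> borel_measurable borel"
    and a: "a > 0"
  shows "(\<integral>\<^sup>+x. ennreal (f (S x)) * indicator {x. a \<le> \<bar>x\<bar>} x \<partial>lborel)
     \<le> ennreal (1/e) * (\<integral>\<^sup>+u. ennreal (f u) * indicator {u. e*a \<le> \<bar>u\<bar>} u \<partial>lborel)"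
proof -
  have Sc: "continuous_on UNIV S" by (rule DERIV_continuous_on) (use dS in \<open>auto intro: has_field_derivative_at_within\<close>)
  have Sm[measurable]: "S \<in> borel_measurable borel" by (rule borel_measurable_continuous_onI[OF Sc])
  define S2 where "S2 = (\<lambda>x. - S (- x))"
  define f2 where "f2 = (\<lambda>u. f (- u))"
  have f2m[measurable]: "f2 \<in> borel_measurable borel" unfolding f2_def by measurable
  have dS2: "(S2 has_real_derivative S' (- x)) (at x)" for x
  proof -
    have "((\<lambda>x. S (- x)) has_real_derivative S' (- x) * - 1) (at x)"
      by (rule DERIV_chain2[OF dS]) (auto intro!: derivative_eq_intros)
    then show ?thesis unfolding S2_def using DERIV_minus by fastforce
  qed
  have cS2': "continuous_on UNIV (\<lambda>x. S' (- x))"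
    by (rule continuous_on_compose2[OF cS']) (auto intro!: continuous_intros)
  have pos: "(\<integral>\<^sup>+x. ennreal (f (S x)) * indicator {a..} x \<partial>lborel)
     \<le> ennreal (1/e) * (\<integral>\<^sup>+u. ennreal (f u) * indicator {e*a..} u \<partial>lborel)"
    by (rule cov_pos[OF dS cS' lo e S0 fm]) (use a in simp)
  have "(\<integral>\<^sup>+x. ennreal (f (S x)) * indicator {..-a} x \<partial>lborel)
      = ennreal \<bar>-1\<bar> * (\<integral>\<^sup>+y. ennreal (f (S (0 + -1 * y))) * indicator {..-a} (0 + -1 * y) \<partial>lborel)"
    by (rule nn_integral_real_affine) auto
  also have "\<dots> = (\<integral>\<^sup>+y. ennreal (f2 (S2 y)) * indicator {a..} y \<partial>lborel)"
    by (auto simp: f2_def S2_def intro!: nn_integral_cong split: split_indicator)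
  also have "\<dots> \<le> ennreal (1/e) * (\<integral>\<^sup>+u. ennreal (f2 u) * indicator {e*a..} u \<partial>lborel)"
    by (rule cov_pos[OF dS2 cS2' lo e _ f2m]) (use a S0 in \<open>simp_all add: S2_def\<close>)
  also have "(\<integral>\<^sup>+u. ennreal (f2 u) * indicator {e*a..} u \<partial>lborel) = (\<integral>\<^sup>+u. ennreal (f u) * indicator {..-(e*a)} u \<partial>lborel)"
  proof -
    have "(\<integral>\<^sup>+u. ennreal (f u) * indicator {..-(e*a)} u \<partial>lborel)
      = ennreal \<bar>-1\<bar> * (\<integral>\<^sup>+y. ennreal (f (0 + -1 * y)) * indicator {..-(e*a)} (0 + -1 * y) \<partial>lborel)"
      by (rule nn_integral_real_affine) auto
    also have "\<dots> = (\<integral>\<^sup>+u. ennreal (f2 u) * indicator {e*a..} u \<partial>lborel)"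
      by (auto simp: f2_def intro!: nn_integral_cong split: split_indicator)
    finally show ?thesis by simp
  qed
  finally have neg: "(\<integral>\<^sup>+x. ennreal (f (S x)) * indicator {..-a} x \<partial>lborel)
      \<le> ennreal (1/e) * (\<integral>\<^sup>+u. ennreal (f u) * indicator {..-(e*a)} u \<partial>lborel)" .
  have "(\<integral>\<^sup>+x. ennreal (f (S x)) * indicator {x. a \<le> \<bar>x\<bar>} x \<partial>lborel)
      = (\<integral>\<^sup>+x. ennreal (f (S x)) * indicator {a..} x + ennreal (f (S x)) * indicator {..-a} x \<partial>lborel)"
    using a by (intro nn_integral_cong) (auto split: split_indicator)
  also have "\<dots> = (\<integral>\<^sup>+x. ennreal (f (S x)) * indicator {a..} x \<partial>lborel) + (\<integral>\<^sup>+x. ennreal (f (S x)) * indicator {..-a} x \<partial>lborel)"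
    by (rule nn_integral_add) measurable
  also have "\<dots> \<le> ennreal (1/e) * (\<integral>\<^sup>+u. ennreal (f u) * indicator {e*a..} u \<partial>lborel)
               + ennreal (1/e) * (\<integral>\<^sup>+u. ennreal (f u) * indicator {..-(e*a)} u \<partial>lborel)"
    by (rule add_mono[OF pos neg])
  also have "\<dots> = ennreal (1/e) * ((\<integral>\<^sup>+u. ennreal (f u) * indicator {e*a..} u \<partial>lborel)
               + (\<integral>\<^sup>+u. ennreal (f u) * indicator {..-(e*a)} u \<partial>lborel))"
    by (simp add: distrib_left)
  also have "(\<integral>\<^sup>+u. ennreal (f u) * indicator {e*a..} u \<partial>lborel) + (\<integral>\<^sup>+u. ennreal (f u) * indicator {..-(e*a)} u \<partial>lborel)
      = (\<integral>\<^sup>+u. ennreal (f u) * indicator {e*a..} u + ennreal (f u) * indicator {..-(e*a)} u \<partial>lborel)"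
    by (rule nn_integral_add[symmetric]) measurable
  also have "\<dots> = (\<integral>\<^sup>+u. ennreal (f u) * indicator {u. e*a \<le> \<bar>u\<bar>} u \<partial>lborel)"
    using mult_pos_pos[OF e a] by (intro nn_integral_cong) (auto split: split_indicator)
  finally show ?thesis .
qed

lemma tail_to_zero:
  fixes k :: "real \<Rightarrow> real"
  assumes ki: "integrable lborel k"
  shows "(\<lambda>m::nat. \<integral>\<^sup>+u. ennreal \<bar>k u\<bar> * indicator {u. real m \<le> \<bar>u\<bar>} u \<partial>lborel) \<longlonglongrightarrow> 0"
proof -
  have km[measurable]: "k \<in> borel_measurable borel" using ki by auto
  have S[measurable]: "{u::real. real m \<le> \<bar>u\<bar>} \<in> sets borel" for m
    by (rule borel_closed) (intro closed_Collect_le continuous_intros)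
  have fin: "(\<integral>\<^sup>+x. ennreal \<bar>k x\<bar> \<partial>lborel) < \<infinity>"
    using integrableD(2)[OF integrable_abs[OF ki]] by (simp add: top.not_eq_extremum)
  have "(\<lambda>i. \<integral>\<^sup>+x. ennreal (norm (0 - \<bar>k x\<bar> * indicator {u. real i \<le> \<bar>u\<bar>} x)) \<partial>lborel) \<longlonglongrightarrow> 0"
  proof (rule nn_integral_dominated_convergence_norm[where w="\<lambda>x. \<bar>k x\<bar>"])
    show "\<And>i. (\<lambda>x. \<bar>k x\<bar> * indicator {u. real i \<le> \<bar>u\<bar>} x) \<in> borel_measurable lborel" by measurable
    show "(\<lambda>x. 0::real) \<in> borel_measurable lborel" by simp
    show "(\<lambda>x. \<bar>k x\<bar>) \<in> borel_measurable lborel" by measurable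
    show "AE x in lborel. norm (\<bar>k x\<bar> * indicator {u. real j \<le> \<bar>u\<bar>} x) \<le> \<bar>k x\<bar>" for j
      by (intro AE_I2) (auto split: split_indicator)
    show "(\<integral>\<^sup>+x. ennreal \<bar>k x\<bar> \<partial>lborel) < \<infinity>" by (rule fin)
    show "AE x in lborel. (\<lambda>i. \<bar>k x\<bar> * indicator {u. real i \<le> \<bar>u\<bar>} x) \<longlonglongrightarrow> 0"
    proof (intro AE_I2)
      fix x :: real
      obtain N :: nat where N: "\<bar>x\<bar> < real N" using reals_Archimedean2 by blast
      have "\<forall>i\<ge>N. \<bar>k x\<bar> * indicator {u. real i \<le> \<bar>u\<bar>} x = 0"
      proof (intro allI impI)
        fix i assume "N \<le> i"
        then have "\<bar>x\<bar> < real i" using N by (smt (verit) of_nat_mono)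
        then show "\<bar>k x\<bar> * indicator {u. real i \<le> \<bar>u\<bar>} x = 0" by (simp split: split_indicator)
      qed
      then show "(\<lambda>i. \<bar>k x\<bar> * indicator {u. real i \<le> \<bar>u\<bar>} x) \<longlonglongrightarrow> 0"
        by (intro tendsto_eventually) (auto simp: eventually_sequentially)
    qed
  qed
  moreover have "(\<integral>\<^sup>+x. ennreal (norm (0 - \<bar>k x\<bar> * indicator {u. real i \<le> \<bar>u\<bar>} x)) \<partial>lborel)
     = (\<integral>\<^sup>+u. ennreal \<bar>k u\<bar> * indicator {u. real i \<le> \<bar>u\<bar>} u \<partial>lborel)" for i
    by (intro nn_integral_cong) (auto split: split_indicator)
  ultimately show ?thesis by simp
qed

lemma per_n_bound:
  fixes \<rho> \<alpha> \<epsilon> :: real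
    and T T' T'' k :: "real \<Rightarrow> real"
    and K :: "real \<Rightarrow> real \<Rightarrow> real \<Rightarrow> real measure"
  assumes K: "sticky_kernels K"
    and rho: "\<rho> > 0" and alpha: "0 < \<alpha>"
    and eps: "\<epsilon> > 0"
    and T1: "\<forall>x. (T has_real_derivative T' x) (at x)"
    and T2: "\<forall>x. (T' has_real_derivative T'' x) (at x)"
    and T0: "T 0 = 0"
    and Tb: "\<forall>x. \<epsilon> \<le> T' x \<and> T' x \<le> 1 / \<epsilon>"
    and kB: "\<And>x. \<bar>k x\<bar> \<le> Bk" and ki: "integrable lborel k"
    and kL: "L-lipschitz_on UNIV k"
    and d: "\<delta> > 0" and kd: "\<And>x. \<bar>x\<bar> < \<delta> \<Longrightarrow> k x = 0"
    and n: "n \<ge> 1" and R: "R > 0"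
  shows "(\<integral>\<^sup>+ y. ennreal \<bar>T_op K \<rho> \<alpha> n
            (\<lambda>x. k (real n powr \<alpha> * T (x / real n powr \<alpha>))) y\<bar> \<partial>lborel)
    \<le> ennreal (exp 1) * (ennreal ((2 * R * (L / \<epsilon>) + 4 * ((LINT u|lborel. \<bar>k u\<bar>) / \<epsilon>) / R) / sqrt (2 / (real n powr (2 * \<alpha>) / real n)))
        + 2 * (ennreal (1 / \<epsilon>) * (\<integral>\<^sup>+u. ennreal \<bar>k u\<bar> * indicator {u. \<epsilon> * (R / 2) \<le> \<bar>u\<bar>} u \<partial>lborel))
        + ennreal (2 * Bk / ((\<epsilon> * \<delta>) * (sqrt (2 / (real n powr (2 * \<alpha>) / real n)))^2)))"
proof -
  define na where "na = real n powr \<alpha>"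
  have na: "na > 0" using n by (simp add: na_def)
  define \<tau> where "\<tau> = real n powr (2 * \<alpha>) / real n"
  have tau: "\<tau> > 0" using n by (simp add: \<tau>_def)
  define g where "g = sqrt (2 / \<tau>)"
  have g: "g > 0" using tau by (simp add: g_def)
  define S where "S = (\<lambda>x. na * T (x / na))"
  define S' where "S' = (\<lambda>x. T' (x / na))"
  define h where "h = (\<lambda>x. k (S x))"
  have hdef: "(\<lambda>x. k (real n powr \<alpha> * T (x / real n powr \<alpha>))) = h" by (simp add: h_def S_def na_def)
  have L: "L \<ge> 0" using lipschitz_on_nonneg[OF kL] .
  have kLip: "\<bar>k a - k b\<bar> \<le> L * \<bar>a - b\<bar>" for a b using lipschitz_onD[OF kL] by (simp add: dist_real_def)
  have kc: "continuous_on UNIV k" by (rule lipschitz_on_continuous_on[OF kL])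
  have km[measurable]: "k \<in> borel_measurable borel" by (rule borel_measurable_continuous_onI[OF kc])
  have Bk0: "Bk \<ge> 0" using kB[of 0] by simp
  have cT': "continuous_on UNIV T'" by (rule DERIV_continuous_on) (use T2 in \<open>auto intro: has_field_derivative_at_within\<close>)
  have dS: "(S has_real_derivative S' x) (at x)" for x
  proof -
    have "((\<lambda>x. T (x / na)) has_real_derivative T' (x / na) * (1 / na)) (at x)"
      by (rule DERIV_chain2[OF T1[rule_format]]) (use na in \<open>auto intro!: derivative_eq_intros\<close>)
    then have "(S has_real_derivative na * (T' (x / na) * (1 / na))) (at x)"
      unfolding S_def by (rule DERIV_cmult)
    moreover have "na * (T' (x / na) * (1 / na)) = S' x" using na by (simp add: S'_def)
    ultimately show ?thesis by simp
  qed
  have cS': "continuous_on UNIV S'" unfolding S'_def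
    by (rule continuous_on_compose2[OF cT']) (use na in \<open>auto intro!: continuous_intros\<close>)
  have lo: "\<epsilon> \<le> S' x" for x using Tb by (simp add: S'_def)
  have up: "\<bar>S' x\<bar> \<le> 1 / \<epsilon>" for x using Tb eps by (simp add: S'_def) (smt (verit))
  have S0: "S 0 = 0" using T0 by (simp add: S_def)
  have Sc: "continuous_on UNIV S" by (rule DERIV_continuous_on) (use dS in \<open>auto intro: has_field_derivative_at_within\<close>)
  have hc: "continuous_on UNIV h" unfolding h_def by (rule continuous_on_compose2[OF kc Sc]) auto
  have hm[measurable]: "h \<in> borel_measurable borel" by (rule borel_measurable_continuous_onI[OF hc])
  have hB: "\<bar>h x\<bar> \<le> Bk" for x by (simp add: h_def kB)
  have hb: "bounded (range h)" unfolding bounded_iff using hB by auto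
  have hL: "\<bar>h x - h y\<bar> \<le> (L / \<epsilon>) * \<bar>x - y\<bar>" for x y
  proof -
    have "\<bar>h x - h y\<bar> \<le> L * \<bar>S x - S y\<bar>" unfolding h_def by (rule kLip)
    also have "\<dots> \<le> L * (1 / \<epsilon> * \<bar>x - y\<bar>)" using mvt_abs[OF dS up, of y x] L by (intro mult_left_mono) (auto simp: abs_minus_commute)
    finally show ?thesis by simp
  qed
  have hz: "h x = 0" if "\<bar>x\<bar> < \<epsilon> * \<delta>" for x
  proof -
    have "\<bar>S x\<bar> \<le> 1 / \<epsilon> * \<bar>x\<bar>" using mvt_abs[OF dS up, of x 0] S0 by simp
    also have "\<dots> < 1 / \<epsilon> * (\<epsilon> * \<delta>)" using that eps by (intro mult_strict_left_mono) auto
    also have "\<dots> = \<delta>" using eps by simp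
    finally show ?thesis unfolding h_def by (rule kd)
  qed
  have h0: "h 0 = 0" using hz[of 0] eps d by simp
  define Tk where "Tk = (\<lambda>b. \<integral>\<^sup>+u. ennreal \<bar>k u\<bar> * indicator {u. b \<le> \<bar>u\<bar>} u \<partial>lborel)"
  have Tl: "(\<integral>\<^sup>+x. ennreal \<bar>h x\<bar> * indicator {x. b \<le> \<bar>x\<bar>} x \<partial>lborel) \<le> ennreal (1 / \<epsilon>) * Tk (\<epsilon> * b)" if "b > 0" for b
    using cov_tail[OF dS cS' lo eps S0 _ that, of "\<lambda>u. \<bar>k u\<bar>"] unfolding h_def Tk_def by simp
  define Ik where "Ik = (LINT u|lborel. \<bar>k u\<bar>)"
  have Ik0: "Ik \<ge> 0" unfolding Ik_def by simp
  have Ikeq: "(\<integral>\<^sup>+u. ennreal \<bar>k u\<bar> \<partial>lborel) = ennreal Ik"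
    unfolding Ik_def by (rule nn_integral_eq_integral[OF integrable_abs[OF ki]]) auto
  have hM: "(\<integral>\<^sup>+x. ennreal \<bar>h x\<bar> \<partial>lborel) \<le> ennreal (Ik / \<epsilon>)"
  proof -
    have "(\<integral>\<^sup>+x. ennreal \<bar>h x\<bar> \<partial>lborel) = (\<integral>\<^sup>+x. ennreal \<bar>h x\<bar> * indicator {x. \<epsilon> * \<delta> \<le> \<bar>x\<bar>} x \<partial>lborel)"
      by (intro nn_integral_cong) (auto simp: hz split: split_indicator)
    also have "\<dots> \<le> ennreal (1 / \<epsilon>) * Tk (\<epsilon> * (\<epsilon> * \<delta>))" using eps d by (intro Tl) simp
    also have "Tk (\<epsilon> * (\<epsilon> * \<delta>)) \<le> ennreal Ik"
      unfolding Tk_def Ikeq[symmetric] by (intro nn_integral_mono) (auto split: split_indicator)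
    then have "ennreal (1 / \<epsilon>) * Tk (\<epsilon> * (\<epsilon> * \<delta>)) \<le> ennreal (1 / \<epsilon>) * ennreal Ik" by (rule mult_left_mono) simp
    also have "\<dots> = ennreal (1 / \<epsilon> * Ik)" using eps Ik0 by (intro ennreal_mult[symmetric]) auto
    also have "\<dots> = ennreal (Ik / \<epsilon>)" by simp
    finally show ?thesis .
  qed
  have Top: "T_op K \<rho> \<alpha> n h x = (LBINT s=0..1. sticky_P K (na * \<rho>) (\<tau> * s) h x - h x)" for x
    unfolding T_op_def na_def \<tau>_def by (simp add: mult.commute mult.left_commute)
  have rpos: "na * \<rho> > 0" using na rho by simp
  have pw: "ennreal \<bar>T_op K \<rho> \<alpha> n h x\<bar> \<le> ennreal (exp 1) *
      ((\<integral>\<^sup>+y. ennreal (g / 2 * exp (- (g * \<bar>x - y\<bar>)) * \<bar>h y - h x\<bar>) \<partial>lborel)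
             + ennreal (exp (- (g * \<bar>x\<bar>)) * \<bar>h x\<bar>))" for x
    unfolding Top g_def by (rule resolvent_bound[OF K rpos tau hc hb h0])
  have "(\<integral>\<^sup>+ y. ennreal \<bar>T_op K \<rho> \<alpha> n h y\<bar> \<partial>lborel)
     \<le> (\<integral>\<^sup>+x. ennreal (exp 1) * ((\<integral>\<^sup>+y. ennreal (g / 2 * exp (- (g * \<bar>x - y\<bar>)) * \<bar>h y - h x\<bar>) \<partial>lborel)
             + ennreal (exp (- (g * \<bar>x\<bar>)) * \<bar>h x\<bar>)) \<partial>lborel)"
    by (intro nn_integral_mono pw)
  also have "\<dots> = ennreal (exp 1) * (\<integral>\<^sup>+x. (\<integral>\<^sup>+y. ennreal (g / 2 * exp (- (g * \<bar>x - y\<bar>)) * \<bar>h y - h x\<bar>) \<partial>lborel)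
             + ennreal (exp (- (g * \<bar>x\<bar>)) * \<bar>h x\<bar>) \<partial>lborel)"
    by (rule nn_integral_cmult) measurable
  also have "\<dots> \<le> ennreal (exp 1) * (ennreal ((2 * R * (L / \<epsilon>) + 4 * (Ik / \<epsilon>) / R) / g)
       + 2 * (\<integral>\<^sup>+x. ennreal \<bar>h x\<bar> * indicator {x. R/2 \<le> \<bar>x\<bar>} x \<partial>lborel)
       + ennreal (2 * Bk / ((\<epsilon> * \<delta>) * g^2)))"
    using eps d L Ik0 by (intro mult_left_mono analysis_bound[OF hm hB hL _ hz _ hM _ g R]) auto
  also have "\<dots> \<le> ennreal (exp 1) * (ennreal ((2 * R * (L / \<epsilon>) + 4 * (Ik / \<epsilon>) / R) / g)
       + 2 * (ennreal (1 / \<epsilon>) * Tk (\<epsilon> * (R / 2)))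
       + ennreal (2 * Bk / ((\<epsilon> * \<delta>) * g^2)))"
    using Tl[of "R/2"] R by (intro mult_left_mono add_mono order.refl) auto
  finally show ?thesis unfolding hdef g_def \<tau>_def Tk_def Ik_def .
qed

theorem lemma3p4:
  fixes \<rho> \<alpha> \<epsilon> :: real
    and T T' T'' k :: "real \<Rightarrow> real"
    and K :: "real \<Rightarrow> real \<Rightarrow> real \<Rightarrow> real measure"
  assumes K: "sticky_kernels K"
    and rho: "\<rho> > 0" and alpha: "0 < \<alpha>" "\<alpha> < 1/2"
    and eps: "\<epsilon> > 0"
    and T1: "\<forall>x. (T has_real_derivative T' x) (at x)"
    and T2: "\<forall>x. (T' has_real_derivative T'' x) (at x)"
    and T0: "T 0 = 0" "T' 0 = 1"
    and Tb: "\<forall>x. \<epsilon> \<le> T' x \<and> T' x \<le> 1 / \<epsilon>" "\<forall>x. \<bar>T'' x\<bar> \<le> 1 / \<epsilon>"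
    and kb: "bounded (range k)" and ki: "integrable lborel k"
    and kl: "\<exists>L. L-lipschitz_on UNIV k"
    and k0: "\<exists>\<delta>>0. \<forall>x. \<bar>x\<bar> < \<delta> \<longrightarrow> k x = 0"
  shows "(\<lambda>n::nat. \<integral>\<^sup>+ y. ennreal \<bar>T_op K \<rho> \<alpha> n
            (\<lambda>x. k (real n powr \<alpha> * T (x / real n powr \<alpha>))) y\<bar> \<partial>lborel)
         \<longlonglongrightarrow> 0"
proof -
  obtain L where kL: "L-lipschitz_on UNIV k" using kl by blast
  have L: "L \<ge> 0" using lipschitz_on_nonneg[OF kL] .
  obtain \<delta> where d: "\<delta> > 0" and kd: "\<And>x. \<bar>x\<bar> < \<delta> \<Longrightarrow> k x = 0" using k0 by blast
  obtain Bk where kB: "\<And>x. \<bar>k x\<bar> \<le> Bk" using kb unfolding bounded_iff by auto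
  have Bk0: "Bk \<ge> 0" using kB[of 0] by simp
  define a where "a = (\<lambda>n::nat. \<integral>\<^sup>+ y. ennreal \<bar>T_op K \<rho> \<alpha> n
            (\<lambda>x. k (real n powr \<alpha> * T (x / real n powr \<alpha>))) y\<bar> \<partial>lborel)"
  define Ik where "Ik = (LINT u|lborel. \<bar>k u\<bar>)"
  have Ik0: "Ik \<ge> 0" unfolding Ik_def by simp
  define Tk where "Tk = (\<lambda>b. \<integral>\<^sup>+u. ennreal \<bar>k u\<bar> * indicator {u. b \<le> \<bar>u\<bar>} u \<partial>lborel)"
  define \<tau> where "\<tau> = (\<lambda>n::nat. real n powr (2 * \<alpha>) / real n)"
  define g where "g = (\<lambda>n. sqrt (2 / \<tau> n))"
  have bound: "a n \<le> ennreal (exp 1) * (ennreal ((2 * R * (L / \<epsilon>) + 4 * (Ik / \<epsilon>) / R) / g n)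
        + 2 * (ennreal (1 / \<epsilon>) * Tk (\<epsilon> * (R / 2)))
        + ennreal (2 * Bk / ((\<epsilon> * \<delta>) * (g n)^2)))" if "n \<ge> 1" "R > 0" for n R
    unfolding a_def Ik_def Tk_def g_def \<tau>_def
    by (rule per_n_bound[OF K rho alpha(1) eps T1 T2 T0(1) Tb(1) kB ki kL d kd that])
  have tau0: "\<tau> \<longlonglongrightarrow> 0"
  proof -
    have "(\<lambda>n. real n powr (2 * \<alpha> - 1)) \<longlonglongrightarrow> 0"
      by (rule tendsto_neg_powr[OF _ filterlim_real_sequentially]) (use alpha in simp)
    moreover have "eventually (\<lambda>n. real n powr (2 * \<alpha> - 1) = \<tau> n) sequentially"
      unfolding eventually_sequentially \<tau>_def
      by (rule exI[of _ 1]) (auto simp: powr_diff)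
    ultimately show ?thesis by (rule Lim_transform_eventually)
  qed
  have tau_nn: "\<tau> n \<ge> 0" for n unfolding \<tau>_def by simp
  have ig: "(\<lambda>n. 1 / g n) \<longlonglongrightarrow> 0"
  proof -
    have "(\<lambda>n. sqrt (\<tau> n / 2)) \<longlonglongrightarrow> sqrt (0 / 2)"
      by (intro tendsto_intros tau0) simp
    moreover have "sqrt (\<tau> n / 2) = 1 / g n" for n
      unfolding g_def by (simp add: real_sqrt_divide)
    ultimately show ?thesis by simp
  qed
  show "(\<lambda>n::nat. \<integral>\<^sup>+ y. ennreal \<bar>T_op K \<rho> \<alpha> n
            (\<lambda>x. k (real n powr \<alpha> * T (x / real n powr \<alpha>))) y\<bar> \<partial>lborel) \<longlonglongrightarrow> 0"
    unfolding a_def[symmetric]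
  proof (rule order_tendstoI)
    fix l :: ennreal assume "l < 0" then show "eventually (\<lambda>n. l < a n) sequentially" by simp
  next
    fix u :: ennreal assume u: "0 < u"
    obtain y where y: "0 < y" "y < u" using dense[OF u] by blast
    have yfin: "y \<noteq> \<infinity>" using y(2) top_greatest[of u] by (metis infinity_ennreal_def leD order_less_le_trans)
    define \<eta> where "\<eta> = enn2real y"
    have eta: "\<eta> > 0" using y(1) yfin by (simp add: \<eta>_def enn2real_positive_iff top.not_eq_extremum)
    have eta_y: "ennreal \<eta> = y" using yfin unfolding \<eta>_def by (metis ennreal_enn2real infinity_ennreal_def top.not_eq_extremum)
    define \<theta> where "\<theta> = \<eta> * \<epsilon> / (8 * exp 1)"
    have theta: "\<theta> > 0" using eta eps by (simp add: \<theta>_def)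
    have "eventually (\<lambda>m. Tk (real m) < ennreal \<theta>) sequentially"
      using order_tendstoD(2)[OF tail_to_zero[OF ki]] theta unfolding Tk_def by simp
    then obtain N0 where N0: "\<And>m. m \<ge> N0 \<Longrightarrow> Tk (real m) < ennreal \<theta>"
      unfolding eventually_sequentially by blast
    define m where "m = N0 + 1"
    have Tkm: "Tk (real m) < ennreal \<theta>" using N0[of m] by (simp add: m_def)
    have m0: "real m > 0" by (simp add: m_def)
    define R where "R = 2 * real m / \<epsilon>"
    have R: "R > 0" using m0 eps by (simp add: R_def)
    have eR: "\<epsilon> * (R / 2) = real m" using eps by (simp add: R_def)
    define C1 where "C1 = 2 * R * (L / \<epsilon>) + 4 * (Ik / \<epsilon>) / R"
    define C2 where "C2 = 2 * Bk / (\<epsilon> * \<delta>)"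
    have C1: "C1 \<ge> 0" unfolding C1_def using R eps L Ik0 by simp
    have C2: "C2 \<ge> 0" unfolding C2_def using Bk0 eps d by simp
    define \<xi> where "\<xi> = (\<lambda>n. exp 1 * (C1 * (1 / g n) + C2 * (1 / g n)^2))"
    have "\<xi> \<longlonglongrightarrow> exp 1 * (C1 * 0 + C2 * 0^2)" unfolding \<xi>_def by (intro tendsto_intros ig)
    then have "\<xi> \<longlonglongrightarrow> 0" by simp
    then have ev1: "eventually (\<lambda>n. \<xi> n < \<eta> / 2) sequentially" using eta by (intro order_tendstoD(2)) auto
    have ev2: "eventually (\<lambda>n::nat. n \<ge> 1) sequentially" by (rule eventually_ge_at_top)
    show "eventually (\<lambda>n. a n < u) sequentially"
      using ev1 ev2
    proof eventually_elim
      case (elim n)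
      have gp: "g n > 0" using elim(2) unfolding g_def \<tau>_def by simp
      have "a n \<le> ennreal (exp 1) * (ennreal (C1 / g n) + 2 * (ennreal (1 / \<epsilon>) * Tk (real m))
            + ennreal (C2 / (g n)^2))"
        using bound[OF elim(2) R] unfolding C1_def C2_def eR by (simp add: mult.assoc)
      also have "\<dots> \<le> ennreal (exp 1) * (ennreal (C1 / g n) + 2 * (ennreal (1 / \<epsilon>) * ennreal \<theta>)
            + ennreal (C2 / (g n)^2))"
        using Tkm by (intro mult_left_mono add_mono order.refl) auto
      also have "\<dots> = ennreal (exp 1 * (C1 / g n + 2 * (1 / \<epsilon> * \<theta>) + C2 / (g n)^2))"
      proof -
        have "2 * (ennreal (1 / \<epsilon>) * ennreal \<theta>) = ennreal (2 * (1 / \<epsilon> * \<theta>))"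
        proof -
          have "ennreal (1 / \<epsilon>) * ennreal \<theta> = ennreal (1 / \<epsilon> * \<theta>)"
            using eps theta by (intro ennreal_mult[symmetric]) auto
          moreover have "ennreal (2 * (1 / \<epsilon> * \<theta>)) = ennreal 2 * ennreal (1 / \<epsilon> * \<theta>)"
            using eps theta by (intro ennreal_mult) auto
          ultimately show ?thesis by simp
        qed
        moreover have "ennreal (C1 / g n) + ennreal (2 * (1 / \<epsilon> * \<theta>)) + ennreal (C2 / (g n)^2)
            = ennreal (C1 / g n + 2 * (1 / \<epsilon> * \<theta>) + C2 / (g n)^2)"
          using C1 C2 gp eps theta by (simp add: ennreal_plus)
        moreover have "ennreal (exp 1) * ennreal (C1 / g n + 2 * (1 / \<epsilon> * \<theta>) + C2 / (g n)^2)
            = ennreal (exp 1 * (C1 / g n + 2 * (1 / \<epsilon> * \<theta>) + C2 / (g n)^2))"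
          using C1 C2 gp eps theta by (intro ennreal_mult[symmetric]) auto
        ultimately show ?thesis by simp
      qed
      also have "exp 1 * (C1 / g n + 2 * (1 / \<epsilon> * \<theta>) + C2 / (g n)^2) = \<xi> n + \<eta> / 4"
        unfolding \<xi>_def \<theta>_def using eps gp by (simp add: field_simps power2_eq_square)
      also have "ennreal (\<xi> n + \<eta> / 4) < ennreal \<eta>"
      proof -
        have "\<xi> n \<ge> 0" unfolding \<xi>_def using C1 C2 gp by simp
        then show ?thesis using elim(1) eta by (subst ennreal_less_iff) auto
      qed
      finally show "a n < u" using eta_y y(2) by simp
    qed
  qed
qed

end
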